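(* Let $\Delta\ge2$ and let $G$ be a connected graph on $n$ vertices in which every vertex has degree $\Delta$, except possibly one vertex of degree $\Delta-1$. If $n\ge 2\Delta+1$, then $G$ contains a path on $2\Delta+1$ vertices. *)

theory Defs
  imports Main
begin

definition simple_graph :: "'a set \<Rightarrow> ('a \<Rightarrow> 'a \<Rightarrow> bool) \<Rightarrow> bool" where
  "simple_graph V E \<longleftrightarrow> finite V
     \<and> (\<forall>u v. E u v \<longrightarrow> u \<in> V \<and> v \<in> V)
     \<and> (\<forall>u v. E u v \<longrightarrow> E v u)
     \<and> (\<forall>v. \<not> E v v)"

definition degree :: "'a set \<Rightarrow> ('a \<Rightarrow> 'a \<Rightarrow> bool) \<Rightarrow> 'a \<Rightarrow> nat" where
  "degree V E v = card {u \<in> V. E v u}"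

definition is_walk :: "'a set \<Rightarrow> ('a \<Rightarrow> 'a \<Rightarrow> bool) \<Rightarrow> 'a list \<Rightarrow> bool" where
  "is_walk V E xs \<longleftrightarrow> xs \<noteq> [] \<and> set xs \<subseteq> V
     \<and> (\<forall>i. Suc i < length xs \<longrightarrow> E (xs ! i) (xs ! Suc i))"

definition is_path :: "'a set \<Rightarrow> ('a \<Rightarrow> 'a \<Rightarrow> bool) \<Rightarrow> 'a list \<Rightarrow> bool" where
  "is_path V E xs \<longleftrightarrow> is_walk V E xs \<and> distinct xs"

definition connected_graph :: "'a set \<Rightarrow> ('a \<Rightarrow> 'a \<Rightarrow> bool) \<Rightarrow> bool" where
  "connected_graph V E \<longleftrightarrow> V \<noteq> {} \<and>
     (\<forall>u\<in>V. \<forall>v\<in>V. \<exists>xs. is_walk V E xs \<and> hd xs = u \<and> last xs = v)"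

end

theory Submission imports Defs begin

lemma walk_iff: "is_walk V E xs \<longleftrightarrow> xs \<noteq> [] \<and> set xs \<subseteq> V \<and> successively E xs"
  unfolding is_walk_def successively_conv_nth by blast

lemma path_iff: "is_path V E xs \<longleftrightarrow> xs \<noteq> [] \<and> set xs \<subseteq> V \<and> successively E xs \<and> distinct xs"
  unfolding is_path_def walk_iff by blast

lemma sg_sym: "simple_graph V E \<Longrightarrow> E u v \<Longrightarrow> E v u"
  unfolding simple_graph_def by blast
lemma sg_irr: "simple_graph V E \<Longrightarrow> \<not> E u u"
  unfolding simple_graph_def by blast
lemma sg_in: "simple_graph V E \<Longrightarrow> E u v \<Longrightarrow> u \<in> V \<and> v \<in> V"
  unfolding simple_graph_def by blast

lemma succ_sym: "simple_graph V E \<Longrightarrow> successively E xs \<Longrightarrow> successively (\<lambda>x y. E y x) xs"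
  by (erule successively_mono) (auto dest: sg_sym)

lemma path_rev: "simple_graph V E \<Longrightarrow> is_path V E xs \<Longrightarrow> is_path V E (rev xs)"
  unfolding path_iff by (auto intro: succ_sym)

lemma path_length: "simple_graph V E \<Longrightarrow> is_path V E xs \<Longrightarrow> length xs \<le> card V"
  unfolding path_iff simple_graph_def by (metis card_mono distinct_card)

lemma path_take: "is_path V E xs \<Longrightarrow> 0 < n \<Longrightarrow> is_path V E (take n xs)"
  unfolding path_iff
  by (metis append_take_drop_id successively_append_iff set_take_subset distinct_take
       order_trans take_eq_Nil not_gr0)

lemma crossing:
  assumes "successively E ws" "ws \<noteq> []" "hd ws \<in> S" "last ws \<notin> S"
  shows "\<exists>x y. x \<in> S \<and> y \<notin> S \<and> E x y"
  using assms
proof (induction ws)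
  case Nil then show ?case by simp
next
  case (Cons a ws)
  show ?case
  proof (cases ws)
    case Nil then show ?thesis using Cons by simp
  next
    case (Cons b ws')
    show ?thesis
    proof (cases "b \<in> S")
      case True
      then show ?thesis using Cons.IH Cons.prems Cons by (auto simp: successively_Cons)
    next
      case False
      then show ?thesis using Cons.prems Cons by (auto simp: successively_Cons)
    qed
  qed
qed

lemma extension:
  assumes g: "simple_graph V E" and c: "connected_graph V E"
    and p: "is_path V E zs" and cyc: "E (last zs) (hd zs)" and ne: "set zs \<noteq> V"
  shows "\<exists>q. is_path V E q \<and> length q = Suc (length zs)"
proof -
  have sub: "set zs \<subseteq> V" "zs \<noteq> []" using p unfolding path_iff by auto
  obtain a where a: "a \<in> V" "a \<notin> set zs" using ne sub by blast
  obtain b where b: "b \<in> set zs" using sub by (cases zs) auto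
  obtain ws where ws: "is_walk V E ws" "hd ws = b" "last ws = a"
    using c a b sub unfolding connected_graph_def by blast
  obtain v u where vu: "v \<in> set zs" "u \<notin> set zs" "E v u"
    using crossing[of E ws "set zs"] ws a b unfolding walk_iff by auto
  obtain as bs where zs: "zs = as @ v # bs" using vu split_list by metis
  have s: "successively E zs" "distinct zs" using p unfolding path_iff by auto
  have s1: "successively E (v # bs)" "successively E as"
    using s(1) unfolding zs successively_append_iff by auto
  have s2: "as \<noteq> [] \<Longrightarrow> E (last (v # bs)) (hd as)"
    using cyc unfolding zs by (auto simp: last_append)
  have "successively E ((v # bs) @ as)" unfolding successively_append_iff using s1 s2 by blast
  then have "successively E (u # (v # bs) @ as)"
    using sg_sym[OF g vu(3)] by (subst successively_Cons) simp
  moreover have "distinct (u # (v # bs) @ as)" using s(2) vu(2) unfolding zs by auto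
  moreover have "set (u # (v # bs) @ as) \<subseteq> V" using sub sg_in[OF g vu(3)] unfolding zs by auto
  ultimately show ?thesis unfolding path_iff by (intro exI[of _ "u # (v # bs) @ as"]) (auto simp: zs)
qed

lemma cycle:
  assumes g: "simple_graph V E" and p: "is_path V E xs"
    and nh: "\<forall>u. E (hd xs) u \<longrightarrow> u \<in> set xs"
    and nl: "\<forall>u. E (last xs) u \<longrightarrow> u \<in> set xs"
    and d: "degree V E (hd xs) + degree V E (last xs) \<ge> length xs"
  shows "\<exists>zs. is_path V E zs \<and> length zs = length xs \<and> set zs = set xs \<and> E (last zs) (hd zs)"
proof -
  have ne: "xs \<noteq> []" and s: "successively E xs" "distinct xs" "set xs \<subseteq> V"
    using p unfolding path_iff by auto
  define A where "A = {i. Suc i < length xs \<and> E (hd xs) (xs ! Suc i)}"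
  define B where "B = {i. Suc i < length xs \<and> E (last xs) (xs ! i)}"
  have fA: "finite A" and fB: "finite B" unfolding A_def B_def
    by (auto intro: finite_subset[of _ "{..<length xs}"])
  have "{u \<in> V. E (hd xs) u} \<subseteq> (\<lambda>i. xs ! Suc i) ` A"
  proof
    fix u assume u: "u \<in> {u \<in> V. E (hd xs) u}"
    then obtain j where j: "j < length xs" "xs ! j = u" using nh by (auto simp: in_set_conv_nth)
    have "j \<noteq> 0"
    proof
      assume "j = 0" then have "u = hd xs" using j ne by (simp add: hd_conv_nth)
      then show False using u sg_irr[OF g] by auto
    qed
    then obtain i where "j = Suc i" using not0_implies_Suc by blast
    then show "u \<in> (\<lambda>i. xs ! Suc i) ` A" using j u unfolding A_def by auto
  qed
  then have dA: "degree V E (hd xs) \<le> card A" unfolding degree_def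
    by (meson card_image_le card_mono fA finite_imageI order_trans)
  have "{u \<in> V. E (last xs) u} \<subseteq> (\<lambda>i. xs ! i) ` B"
  proof
    fix u assume u: "u \<in> {u \<in> V. E (last xs) u}"
    then obtain j where j: "j < length xs" "xs ! j = u" using nl by (auto simp: in_set_conv_nth)
    have "j \<noteq> length xs - 1" using j u sg_irr[OF g] ne by (auto simp: last_conv_nth)
    then have "Suc j < length xs" using j by linarith
    then show "u \<in> (\<lambda>i. xs ! i) ` B" using j u unfolding B_def by auto
  qed
  then have dB: "degree V E (last xs) \<le> card B" unfolding degree_def
    by (meson card_image_le card_mono fB finite_imageI order_trans)
  have "A \<inter> B \<noteq> {}"
  proof
    assume "A \<inter> B = {}"
    then have "card A + card B = card (A \<union> B)" using fA fB by (simp add: card_Un_disjoint)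
    also have "\<dots> \<le> card {..<length xs - 1}"
      by (rule card_mono) (auto simp: A_def B_def)
    moreover have "card {..<length xs - 1} < length xs" using ne by simp
    ultimately show False using d dA dB by linarith
  qed
  then obtain i where i: "Suc i < length xs" "E (hd xs) (xs ! Suc i)" "E (last xs) (xs ! i)"
    unfolding A_def B_def by auto
  define as where "as = take (Suc i) xs"
  define bs where "bs = drop (Suc i) xs"
  have xs: "xs = as @ bs" unfolding as_def bs_def by simp
  have asne: "as \<noteq> []" and bsne: "bs \<noteq> []" using i unfolding as_def bs_def by auto
  have hb: "hd bs = xs ! Suc i" unfolding bs_def using i by (simp add: hd_drop_conv_nth)
  have la: "last as = xs ! i" unfolding as_def using i by (subst last_conv_nth) (auto simp: min_def)
  have ha: "hd as = hd xs" using xs asne by simp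
  have lb: "last bs = last xs" using xs bsne by simp
  have sab: "successively E as" "successively E bs" using s(1) unfolding xs successively_append_iff by auto
  have "successively E (as @ rev bs)"
    unfolding successively_append_iff using sab asne bsne la lb i(3) succ_sym[OF g sab(2)] sg_sym[OF g]
    by (auto simp: hd_rev)
  moreover have "distinct (as @ rev bs)" using s(2) unfolding xs by auto
  moreover have "set (as @ rev bs) = set xs" unfolding xs by auto
  moreover have "E (last (as @ rev bs)) (hd (as @ rev bs))"
    using asne bsne hb ha i(2) sg_sym[OF g] by (simp add: last_rev)
  ultimately show ?thesis using s(3) xs asne by (intro exI[of _ "as @ rev bs"]) (auto simp: path_iff)
qed

lemma rotate:
  assumes g: "simple_graph V E" and p: "is_path V E xs"
    and j: "2 \<le> j" "j < length xs" and e: "E (hd xs) (xs ! j)"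
  shows "is_path V E (rev (take j xs) @ drop j xs) \<and> length (rev (take j xs) @ drop j xs) = length xs
    \<and> hd (rev (take j xs) @ drop j xs) = xs ! (j - 1) \<and> last (rev (take j xs) @ drop j xs) = last xs"
proof -
  have ne: "xs \<noteq> []" and s: "successively E xs" "distinct xs" "set xs \<subseteq> V"
    using p unfolding path_iff by auto
  have st: "successively E (take j xs)" "successively E (drop j xs)"
    using s(1) by (metis append_take_drop_id successively_append_iff)+
  have tne: "take j xs \<noteq> []" and dne: "drop j xs \<noteq> []" using j by auto
  have h1: "hd (take j xs) = hd xs" using j ne by simp
  have h2: "hd (drop j xs) = xs ! j" using j by (simp add: hd_drop_conv_nth)
  have "successively E (rev (take j xs) @ drop j xs)"
    unfolding successively_append_iff using st succ_sym[OF g st(1)] tne dne h1 h2 e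
    by (simp add: last_rev)
  moreover have "distinct (rev (take j xs) @ drop j xs)" using s(2)
    by (metis append_take_drop_id distinct_append distinct_rev set_rev)
  moreover have "set (rev (take j xs) @ drop j xs) \<subseteq> V" using s(3)
    by (metis append_take_drop_id set_append set_rev)
  moreover have "hd (rev (take j xs) @ drop j xs) = xs ! (j - 1)"
    using tne j by (simp add: hd_rev last_conv_nth min_def)
  moreover have "last (rev (take j xs) @ drop j xs) = last xs" using dne by simp
  ultimately show ?thesis unfolding path_iff using j by auto
qed

lemma fix_end:
  assumes g: "simple_graph V E" and D: "\<Delta> \<ge> 2"
    and hw: "\<forall>v\<in>V. v \<noteq> w \<longrightarrow> degree V E v = \<Delta>"
    and p: "is_path V E xs" and hx: "hd xs = w" and dw: "degree V E w = \<Delta> - 1"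
    and len: "length xs = 2 * \<Delta>"
    and nh: "\<forall>u. E (hd xs) u \<longrightarrow> u \<in> set xs"
    and nl: "\<forall>u. E (last xs) u \<longrightarrow> u \<in> set xs"
  shows "\<exists>ys. is_path V E ys \<and> length ys = length xs \<and>
           degree V E (hd ys) + degree V E (last ys) \<ge> length ys"
proof -
  have ne: "xs \<noteq> []" and s: "successively E xs" "distinct xs" "set xs \<subseteq> V"
    using p unfolding path_iff by auto
  have fin: "finite V" using g unfolding simple_graph_def by blast
  have h0: "xs ! 0 = w" using hx ne by (simp add: hd_conv_nth)
  have lw: "last xs \<noteq> w"
  proof
    assume "last xs = w"
    then have "xs ! (length xs - 1) = xs ! 0" using h0 ne by (simp add: last_conv_nth)
    then show False using s(2) len D by (simp add: nth_eq_iff_index_eq)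
  qed
  have lV: "last xs \<in> V" using s(3) ne by auto
  show ?thesis
  proof (cases "\<Delta> \<ge> 3")
    case True
    have "\<exists>u\<in>{u\<in>V. E w u}. u \<noteq> xs ! 1"
    proof (rule ccontr)
      assume "\<not> ?thesis"
      then have "{u\<in>V. E w u} \<subseteq> {xs ! 1}" by auto
      then have "card {u\<in>V. E w u} \<le> 1" by (metis card.empty card.insert card_mono empty_iff finite.emptyI finite.insertI One_nat_def)
      then show False using dw True unfolding degree_def by simp
    qed
    then obtain u where u: "E w u" "u \<noteq> xs ! 1" by auto
    then obtain j where jj: "j < length xs" "xs ! j = u" using nh hx by (auto simp: in_set_conv_nth)
    have "j \<noteq> 0" using jj u h0 sg_irr[OF g] by (metis)
    moreover have "j \<noteq> 1" using jj u by auto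
    ultimately have j2: "2 \<le> j" by linarith
    let ?ys = "rev (take j xs) @ drop j xs"
    have r: "is_path V E ?ys" "length ?ys = length xs" "hd ?ys = xs ! (j - 1)" "last ?ys = last xs"
      using rotate[OF g p j2 jj(1)] u jj hx by auto
    have "xs ! (j - 1) \<noteq> xs ! 0" using s(2) j2 jj(1) by (subst nth_eq_iff_index_eq) auto
    then have "xs ! (j - 1) \<noteq> w" using h0 by simp
    moreover have "xs ! (j - 1) \<in> V" using s(3) jj(1) by (meson diff_le_self le_less_trans nth_mem subsetD)
    ultimately have "degree V E (hd ?ys) = \<Delta>" using hw r by auto
    moreover have "degree V E (last ?ys) = \<Delta>" using hw r lw lV by auto
    ultimately show ?thesis using r len by (intro exI[of _ ?ys]) auto
  next
    case False
    with D have D2: "\<Delta> = 2" by simp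
    with len obtain a b c d where xs: "xs = [a, b, c, d]"
      by (cases xs rule: list.exhaust; simp; rename_tac xs1; case_tac xs1 rule: list.exhaust; simp;
          rename_tac xs2; case_tac xs2 rule: list.exhaust; simp;
          rename_tac xs3; case_tac xs3 rule: list.exhaust; simp)
    have dist: "distinct [a,b,c,d]" and V4: "a \<in> V" "b \<in> V" "c \<in> V" "d \<in> V"
      and eab: "E a b" and ebc: "E b c" and ecd: "E c d"
      using s unfolding xs by auto
    have aw: "a = w" using hx xs by simp
    have Na: "card {u\<in>V. E a u} = 1" using dw aw D2 unfolding degree_def by simp
    have Na': "\<And>u. E a u \<Longrightarrow> u = b"
    proof -
      fix u assume "E a u"
      then have "u \<in> {u\<in>V. E a u}" "b \<in> {u\<in>V. E a u}" using eab sg_in[OF g] by auto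
      then show "u = b" using Na by (metis card_1_singletonE singletonD)
    qed
    have "{u\<in>V. E d u} \<subseteq> {b, c}"
    proof
      fix u assume u: "u \<in> {u\<in>V. E d u}"
      then have "u \<in> {a,b,c,d}" using nl xs by auto
      moreover have "u \<noteq> d" using u sg_irr[OF g] by auto
      moreover have "u \<noteq> a" using u Na'[of d] sg_sym[OF g] dist by auto
      ultimately show "u \<in> {b,c}" by auto
    qed
    moreover have "card {u\<in>V. E d u} = 2" using hw V4 dist aw D2 unfolding degree_def by auto
    moreover have "b \<in> {u\<in>V. E d u}" if "{u\<in>V. E d u} \<subseteq> {b, c}" "card {u\<in>V. E d u} = 2"
    proof (rule ccontr)
      assume "b \<notin> {u\<in>V. E d u}"
      with that have "{u\<in>V. E d u} \<subseteq> {c}" by auto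
      then have "card {u\<in>V. E d u} \<le> card {c}" by (intro card_mono) auto
      then show False using that by simp
    qed
    ultimately have "b \<in> {u\<in>V. E d u}" by blast
    then have edb: "E b d" using sg_sym[OF g] by auto
    have "{a, c, d} \<subseteq> {u\<in>V. E b u}" using eab ebc edb V4 sg_sym[OF g] by auto
    then have "card {a, c, d} \<le> card {u\<in>V. E b u}" using fin by (intro card_mono) auto
    moreover have "card {u\<in>V. E b u} = 2" using hw V4 dist aw D2 unfolding degree_def by auto
    moreover have "card {a, c, d} = 3" using dist by auto
    ultimately show ?thesis by simp
  qed
qed

theorem lemma3p2:
  fixes V :: "'a set" and E :: "'a \<Rightarrow> 'a \<Rightarrow> bool" and \<Delta> :: nat
  assumes "simple_graph V E"
    and "connected_graph V E"
    and "\<Delta> \<ge> 2"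
    and "\<exists>w\<in>V. \<forall>v\<in>V. v \<noteq> w \<longrightarrow> degree V E v = \<Delta>"
    and "\<forall>v\<in>V. degree V E v = \<Delta> \<or> degree V E v = \<Delta> - 1"
    and "card V \<ge> 2 * \<Delta> + 1"
  shows "\<exists>xs. is_path V E xs \<and> length xs = 2 * \<Delta> + 1"
proof -
  note g = assms(1) and c = assms(2) and D = assms(3) and dg = assms(5) and cV = assms(6)
  obtain w where w: "w \<in> V" and hw: "\<forall>v\<in>V. v \<noteq> w \<longrightarrow> degree V E v = \<Delta>"
    using assms(4) by blast
  have fin: "finite V" using g unfolding simple_graph_def by blast
  have "is_path V E [w]" using w unfolding path_iff by auto
  then obtain xs where p: "is_path V E xs" and mx: "\<forall>ys. is_path V E ys \<longrightarrow> length ys \<le> length xs"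
    using ex_has_greatest_nat[of "is_path V E" "[w]" length "Suc (card V)"] path_length[OF g]
    by (metis le_imp_less_Suc)
  have nbr: "\<forall>u. E (hd ys) u \<longrightarrow> u \<in> set ys" if ys: "is_path V E ys" "length ys = length xs" for ys
  proof (intro allI impI, rule ccontr)
    fix u assume u: "E (hd ys) u" "u \<notin> set ys"
    have "is_path V E (u # ys)" using ys(1) u sg_in[OF g u(1)] sg_sym[OF g u(1)]
      unfolding path_iff by (auto simp: successively_Cons)
    then show False using mx ys(2) by fastforce
  qed
  have nbrl: "\<forall>u. E (last ys) u \<longrightarrow> u \<in> set ys" if ys: "is_path V E ys" "length ys = length xs" for ys
    using nbr[of "rev ys"] path_rev[OF g ys(1)] ys by (simp add: hd_rev)
  have len: "length xs \<ge> 2 * \<Delta> + 1"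
  proof (rule ccontr)
    assume "\<not> ?thesis"
    then have m: "length xs \<le> 2 * \<Delta>" by simp
    have ne: "xs \<noteq> []" and s: "distinct xs" "set xs \<subseteq> V" using p unfolding path_iff by auto
    have hV: "hd xs \<in> V" and lV: "last xs \<in> V" using ne s by auto
    have dge: "\<And>v. v \<in> V \<Longrightarrow> degree V E v \<ge> \<Delta> - 1" using dg by force
    have key: "\<exists>ys. is_path V E ys \<and> length ys = length xs \<and>
           degree V E (hd ys) + degree V E (last ys) \<ge> length ys"
    proof (cases "length xs \<le> 2 * \<Delta> - 2")
      case True
      then show ?thesis using p dge[OF hV] dge[OF lV] by (intro exI[of _ xs]) auto
    next
      case False
      then have m3: "length xs \<ge> 3" using D by linarith
      have hl: "hd xs \<noteq> last xs"
      proof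
        assume "hd xs = last xs"
        then have "xs ! 0 = xs ! (length xs - 1)" using ne by (simp add: hd_conv_nth last_conv_nth)
        then show False using s(1) m3 using nth_eq_iff_index_eq[OF s(1), of 0 "length xs - 1"] ne by simp
      qed
      show ?thesis
      proof (cases "hd xs = w")
        case True
        then have dl: "degree V E (last xs) = \<Delta>" using hw hl lV by auto
        show ?thesis
        proof (cases "length xs = 2 * \<Delta> \<and> degree V E w = \<Delta> - 1")
          case True
          then show ?thesis using fix_end[OF g D hw p \<open>hd xs = w\<close>] nbr[OF p] nbrl[OF p] by auto
        next
          case False
          then have "degree V E w = \<Delta> \<or> length xs \<le> 2 * \<Delta> - 1" using dg w m by auto
          then show ?thesis using p dl True dge[OF w] m D by (intro exI[of _ xs]) auto
        qed
      next
        case hnw: False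
        then have dh: "degree V E (hd xs) = \<Delta>" using hw hV by auto
        show ?thesis
        proof (cases "last xs = w")
          case True
          have rp: "is_path V E (rev xs)" using path_rev[OF g p] .
          have rh: "hd (rev xs) = w" using True ne by (simp add: hd_rev)
          show ?thesis
          proof (cases "length xs = 2 * \<Delta> \<and> degree V E w = \<Delta> - 1")
            case True
            then show ?thesis using fix_end[OF g D hw rp rh] nbr[OF rp] nbrl[OF rp] by auto
          next
            case False
            then have "degree V E w = \<Delta> \<or> length xs \<le> 2 * \<Delta> - 1" using dg w m by auto
            then show ?thesis using p dh \<open>last xs = w\<close> dge[OF w] m D by (intro exI[of _ xs]) auto
          qed
        next
          case False
          then have "degree V E (last xs) = \<Delta>" using hw lV by auto
          then show ?thesis using p dh m by (intro exI[of _ xs]) auto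
        qed
      qed
    qed
    then obtain ys where ys: "is_path V E ys" "length ys = length xs"
      "degree V E (hd ys) + degree V E (last ys) \<ge> length ys" by blast
    obtain zs where zs: "is_path V E zs" "length zs = length xs" "set zs = set ys" "E (last zs) (hd zs)"
      using cycle[OF g ys(1) nbr[OF ys(1,2)] nbrl[OF ys(1,2)] ys(3)] ys(2) by auto
    have "card (set zs) = length xs" using zs(1,2) unfolding path_iff by (simp add: distinct_card)
    then have "set zs \<noteq> V" using m cV by auto
    then obtain q where "is_path V E q" "length q = Suc (length zs)"
      using extension[OF g c zs(1) zs(4)] by blast
    then show False using mx zs(2) by fastforce
  qed
  show ?thesis using path_take[OF p, of "2 * \<Delta> + 1"] len by (intro exI[of _ "take (2 * \<Delta> + 1) xs"]) auto
qed

end
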